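(* Let $r\ge 3$, $n\ge1$, and let $f:\mathbb{Z}_r^n\to\mathbb{C}$ satisfy $f^{>1}\equiv 0$. Suppose $\|d(f,\{0,1\})\|_2^2\le\epsilon'$, $\|f^{=1}\|_2^2<10^4\epsilon'$, and $\epsilon'<\frac{2}{10^8 r}$. Then $\|f^{=1}\|_2^2<2\epsilon'$.
   Context: $\mathbb{Z}_r^n$ carries the uniform probability measure $\mu$; for $f:\mathbb{Z}_r^n\to\mathbb{C}$, $\|f\|_2^2=\int|f|^2\,d\mu$. For $S\in\mathbb{Z}_r^n$, $u_S(T)=\exp\big(2\pi i\sum_{k=1}^n S_kT_k/r\big)$; these form an orthonormal basis, and $\widehat f(S)=\int f(T)\overline{u_S(T)}\,\mu(dT)$, so $f=\sum_S\widehat f(S)u_S$. Let $|S|=|\{k:S_k\ne0\}|$, $f^{=k}=\sum_{|S|=k}\widehat f(S)u_S$, $f^{>k}=\sum_{|S|>k}\widehat f(S)u_S$. For $z\in\mathbb{C}$, $d(z,\{0,1\})=\min(|z|,|z-1|)$, and $d(f,\{0,1\})$ denotes the function $x\mapsto d(f(x),\{0,1\})$. *)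

theory Defs
  imports "HOL-Analysis.Analysis" "HOL-Library.FuncSet"
begin

text \<open>The group Z_r^n, represented as extensional functions {0..<n} -> {0..<r}
  (value undefined outside {0..<n}).\<close>
definition cube :: "nat \<Rightarrow> nat \<Rightarrow> (nat \<Rightarrow> nat) set" where
  "cube r n = PiE {0..<n} (\<lambda>_. {0..<r})"

definition character :: "nat \<Rightarrow> nat \<Rightarrow> (nat \<Rightarrow> nat) \<Rightarrow> (nat \<Rightarrow> nat) \<Rightarrow> complex" where
  "character r n S T = exp (2 * pi * \<i> * of_nat (\<Sum>k<n. S k * T k) / of_nat r)"

definition avg :: "nat \<Rightarrow> nat \<Rightarrow> ((nat \<Rightarrow> nat) \<Rightarrow> 'a::real_vector) \<Rightarrow> 'a" where
  "avg r n g = (1 / real (card (cube r n))) *\<^sub>R (\<Sum>T\<in>cube r n. g T)"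

definition fourier_coeff :: "nat \<Rightarrow> nat \<Rightarrow> ((nat \<Rightarrow> nat) \<Rightarrow> complex) \<Rightarrow> (nat \<Rightarrow> nat) \<Rightarrow> complex" where
  "fourier_coeff r n f S = avg r n (\<lambda>T. f T * cnj (character r n S T))"

definition weight :: "nat \<Rightarrow> (nat \<Rightarrow> nat) \<Rightarrow> nat" where
  "weight n S = card {k\<in>{0..<n}. S k \<noteq> 0}"

definition level_part :: "nat \<Rightarrow> nat \<Rightarrow> (nat \<Rightarrow> bool) \<Rightarrow> ((nat \<Rightarrow> nat) \<Rightarrow> complex) \<Rightarrow> (nat \<Rightarrow> nat) \<Rightarrow> complex" where
  "level_part r n P f T = (\<Sum>S\<in>{S\<in>cube r n. P (weight n S)}. fourier_coeff r n f S * character r n S T)"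

definition level_eq :: "nat \<Rightarrow> nat \<Rightarrow> nat \<Rightarrow> ((nat \<Rightarrow> nat) \<Rightarrow> complex) \<Rightarrow> (nat \<Rightarrow> nat) \<Rightarrow> complex" where
  "level_eq r n k f = level_part r n (\<lambda>w. w = k) f"

definition level_gt :: "nat \<Rightarrow> nat \<Rightarrow> nat \<Rightarrow> ((nat \<Rightarrow> nat) \<Rightarrow> complex) \<Rightarrow> (nat \<Rightarrow> nat) \<Rightarrow> complex" where
  "level_gt r n k f = level_part r n (\<lambda>w. w > k) f"

definition norm2_sq :: "nat \<Rightarrow> nat \<Rightarrow> ((nat \<Rightarrow> nat) \<Rightarrow> complex) \<Rightarrow> real" where
  "norm2_sq r n g = avg r n (\<lambda>T. (cmod (g T))^2)"

definition dist01 :: "complex \<Rightarrow> real" where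
  "dist01 z = min (cmod z) (cmod (z - 1))"

end

theory Submission
  imports Defs
begin

definition mean :: "nat \<Rightarrow> (nat \<Rightarrow> 'a::real_vector) \<Rightarrow> 'a" where
  "mean r \<phi> = (1 / real r) *\<^sub>R (\<Sum>t\<in>{0..<r}. \<phi> t)"

lemma card_cube: "card (cube r n) = r ^ n"
  by (simp add: cube_def card_PiE)

lemma finite_cube: "finite (cube r n)"
  by (simp add: cube_def finite_PiE)

lemma avg_prod:
  fixes \<phi> :: "nat \<Rightarrow> nat \<Rightarrow> 'a::real_normed_field"
  shows "avg r n (\<lambda>T. \<Prod>i\<in>{0..<n}. \<phi> i (T i)) = (\<Prod>i\<in>{0..<n}. mean r (\<phi> i))"
proof -
  have "(\<Sum>T\<in>cube r n. \<Prod>i\<in>{0..<n}. \<phi> i (T i)) = (\<Prod>i\<in>{0..<n}. \<Sum>t\<in>{0..<r}. \<phi> i t)"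
    unfolding cube_def by (rule prod_sum_PiE[symmetric]) auto
  then show ?thesis
    unfolding avg_def mean_def card_cube scaleR_conv_of_real
    by (simp add: prod_dividef)
qed

lemma avg_sum:
  fixes F :: "'b \<Rightarrow> (nat \<Rightarrow> nat) \<Rightarrow> 'a::real_vector"
  shows "avg r n (\<lambda>T. \<Sum>j\<in>J. F j T) = (\<Sum>j\<in>J. avg r n (F j))"
  unfolding avg_def by (simp add: scaleR_sum_right sum.swap[of _ J])

lemma avg_add:
  "avg r n (\<lambda>T. F T + G T) = avg r n F + avg r n G"
  unfolding avg_def by (simp add: sum.distrib scaleR_add_right)

lemma avg_diff:
  "avg r n (\<lambda>T. F T - G T) = avg r n F - avg r n G"
  unfolding avg_def by (simp add: sum_subtractf scaleR_diff_right)

lemma avg_cmult: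
  fixes F :: "(nat \<Rightarrow> nat) \<Rightarrow> 'a::real_algebra"
  shows "avg r n (\<lambda>T. c * F T) = c * avg r n F"
  unfolding avg_def by (simp add: sum_distrib_left mult_scaleR_right)

lemma avg_of_real:
  "avg r n (\<lambda>T. complex_of_real (F T)) = complex_of_real (avg r n F)"
  unfolding avg_def scaleR_conv_of_real by simp

lemma avg_Re:
  "avg r n (\<lambda>T. Re (F T)) = Re (avg r n F)"
  unfolding avg_def by (simp add: Re_sum)

lemma avg_const:
  assumes "r > 0"
  shows "avg r n (\<lambda>T. c) = c"
  using assms unfolding avg_def by (simp add: card_cube sum_constant_scaleR)

lemma avg_mono:
  fixes F G :: "(nat \<Rightarrow> nat) \<Rightarrow> real"
  assumes "\<And>T. T \<in> cube r n \<Longrightarrow> F T \<le> G T"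
  shows "avg r n F \<le> avg r n G"
  unfolding avg_def using assms by (auto intro!: divide_right_mono sum_mono)

lemma avg_nonneg:
  fixes F :: "(nat \<Rightarrow> nat) \<Rightarrow> real"
  assumes "\<And>T. T \<in> cube r n \<Longrightarrow> 0 \<le> F T"
  shows "0 \<le> avg r n F"
  unfolding avg_def using assms by (auto intro!: sum_nonneg divide_nonneg_nonneg)

lemma norm_avg:
  fixes F :: "(nat \<Rightarrow> nat) \<Rightarrow> 'a::real_normed_vector"
  shows "norm (avg r n F) \<le> avg r n (\<lambda>T. norm (F T))"
  unfolding avg_def by (auto intro!: divide_right_mono norm_sum)

lemma mean_one:
  assumes "r > 0"
  shows "mean r (\<lambda>t. 1::'a::real_normed_field) = 1"
proof -
  have "(1 / real r) *\<^sub>R (of_nat r :: 'a) = of_real (1 / real r * real r)"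
    by (simp add: scaleR_conv_of_real)
  then show ?thesis using assms unfolding mean_def by (simp add: sum_constant_scaleR)
qed

lemma prod_delta_coord:
  assumes "j < (n::nat)"
  shows "(\<Prod>i\<in>{0..<n}. if i = j then x i else (1::'a::comm_monoid_mult)) = x j"
  using assms by (simp add: prod.delta)

lemma avg1:
  fixes a :: "nat \<Rightarrow> 'a::real_normed_field"
  assumes "r > 0" "j < n"
  shows "avg r n (\<lambda>T. a (T j)) = mean r a"
proof -
  have "avg r n (\<lambda>T. a (T j)) = avg r n (\<lambda>T. \<Prod>i\<in>{0..<n}. (\<lambda>i t. if i = j then a t else 1) i (T i))"
    using assms by (simp add: prod_delta_coord)
  also have "\<dots> = (\<Prod>i\<in>{0..<n}. mean r (\<lambda>t. if i = j then a t else 1))"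
    by (rule avg_prod)
  also have "\<dots> = (\<Prod>i\<in>{0..<n}. if i = j then mean r a else 1)"
    using assms by (intro prod.cong) (auto simp: mean_one)
  also have "\<dots> = mean r a" using assms by (simp add: prod_delta_coord)
  finally show ?thesis .
qed

lemma avg2:
  fixes a b :: "nat \<Rightarrow> 'a::real_normed_field"
  assumes "r > 0" "j < n" "k < n" "j \<noteq> k"
  shows "avg r n (\<lambda>T. a (T j) * b (T k)) = mean r a * mean r b"
proof -
  have "avg r n (\<lambda>T. a (T j) * b (T k)) = avg r n (\<lambda>T. \<Prod>i\<in>{0..<n}.
      (\<lambda>i t. (if i = j then a t else 1) * (if i = k then b t else 1)) i (T i))"
    using assms by (simp add: prod.distrib prod_delta_coord)
  also have "\<dots> = (\<Prod>i\<in>{0..<n}. mean r (\<lambda>t. (if i = j then a t else 1) * (if i = k then b t else 1)))"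
    by (rule avg_prod)
  also have "\<dots> = (\<Prod>i\<in>{0..<n}. (if i = j then mean r a else 1) * (if i = k then mean r b else 1))"
    using assms by (intro prod.cong) (auto simp: mean_one)
  also have "\<dots> = mean r a * mean r b" using assms by (simp add: prod.distrib prod_delta_coord)
  finally show ?thesis .
qed

lemma avg4_zero:
  fixes a b c d :: "nat \<Rightarrow> 'a::real_normed_field"
  assumes "r > 0" "j < n" "k < n" "l < n" "m < n" "j \<noteq> k" "j \<noteq> l" "j \<noteq> m" "mean r a = 0"
  shows "avg r n (\<lambda>T. a (T j) * b (T k) * c (T l) * d (T m)) = 0"
proof -
  have "avg r n (\<lambda>T. a (T j) * b (T k) * c (T l) * d (T m)) = avg r n (\<lambda>T. \<Prod>i\<in>{0..<n}.
      (\<lambda>i t. (if i = j then a t else 1) * (if i = k then b t else 1) * (if i = l then c t else 1)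
         * (if i = m then d t else 1)) i (T i))"
    using assms by (simp add: prod.distrib prod_delta_coord)
  also have "\<dots> = (\<Prod>i\<in>{0..<n}. mean r (\<lambda>t. (if i = j then a t else 1) * (if i = k then b t else 1)
       * (if i = l then c t else 1) * (if i = m then d t else 1)))"
    by (rule avg_prod)
  also have "\<dots> = 0"
    using assms by (intro prod_zero) (auto intro!: bexI[of _ j])
  finally show ?thesis .
qed


lemma mean_of_real:
  "mean r (\<lambda>t. complex_of_real (\<phi> t)) = complex_of_real (mean r \<phi>)"
  unfolding mean_def scaleR_conv_of_real by simp

lemma mean_cnj:
  "mean r (\<lambda>t. cnj (\<phi> t)) = cnj (mean r \<phi>)"
  unfolding mean_def scaleR_conv_of_real by simp

lemma mean_mono:
  fixes F G :: "nat \<Rightarrow> real"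
  assumes "\<And>t. t < r \<Longrightarrow> F t \<le> G t"
  shows "mean r F \<le> mean r G"
  unfolding mean_def using assms by (auto intro!: divide_right_mono sum_mono)

lemma mean_cmult:
  fixes F :: "nat \<Rightarrow> real"
  shows "mean r (\<lambda>t. c * F t) = c * mean r F"
  unfolding mean_def by (simp add: sum_distrib_left)

lemma sum4_delta:
  fixes Q :: "nat \<Rightarrow> nat \<Rightarrow> real"
  assumes fin: "finite I"
  shows "(\<Sum>j\<in>I. \<Sum>k\<in>I. \<Sum>l\<in>I. \<Sum>m\<in>I. (if k = j then if m = l then Q j l else 0 else 0)
     + (if l = j then if m = k then Q j k else 0 else 0) + (if m = j then if l = k then Q j k else 0 else 0))
   = 3 * (\<Sum>j\<in>I. \<Sum>k\<in>I. Q j k)"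
proof -
  have s1: "(\<Sum>m\<in>I. (if k = j then if m = l then Q j l else 0 else 0)
     + (if l = j then if m = k then Q j k else 0 else 0) + (if m = j then if l = k then Q j k else 0 else 0))
     = (if k = j then Q j l else 0) + (if l = j then Q j k else 0) + (if l = k then Q j k else 0)"
    if "j \<in> I" "k \<in> I" "l \<in> I" for j k l
    using that fin by (simp add: sum.distrib)
  have s2: "(\<Sum>l\<in>I. (if k = j then Q j l else 0) + (if l = j then Q j k else 0) + (if l = k then Q j k else 0))
     = (if k = j then (\<Sum>l\<in>I. Q j l) else 0) + Q j k + Q j k"
    if "j \<in> I" "k \<in> I" for j k
    using that fin by (simp add: sum.distrib)
  have s3: "(\<Sum>k\<in>I. (if k = j then (\<Sum>l\<in>I. Q j l) else 0) + Q j k + Q j k) = 3 * (\<Sum>k\<in>I. Q j k)"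
    if "j \<in> I" for j
    using that fin by (simp add: sum.distrib flip: sum_distrib_left)
  show ?thesis
    using s1 s2 s3 by (simp add: sum_distrib_left)
qed

lemma moment1:
  fixes g :: "nat \<Rightarrow> nat \<Rightarrow> complex"
  assumes r: "r > 0" and mz: "\<And>j. j < n \<Longrightarrow> mean r (g j) = 0"
  shows "avg r n (\<lambda>T. \<Sum>j\<in>{0..<n}. g j (T j)) = 0"
  using assms by (simp add: avg_sum avg1)

lemma moment2:
  fixes g :: "nat \<Rightarrow> nat \<Rightarrow> complex"
  assumes r: "r > 0" and mz: "\<And>j. j < n \<Longrightarrow> mean r (g j) = 0"
  shows "avg r n (\<lambda>T. (cmod (\<Sum>j\<in>{0..<n}. g j (T j)))^2)
     = (\<Sum>j\<in>{0..<n}. mean r (\<lambda>t. (cmod (g j t))^2))"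
proof -
  have tm: "avg r n (\<lambda>T. g j (T j) * cnj (g k (T k)))
      = (if k = j then complex_of_real (mean r (\<lambda>t. (cmod (g j t))^2)) else 0)"
    if "j < n" "k < n" for j k
  proof (cases "k = j")
    case True
    then show ?thesis using that r
      by (simp add: avg1[where a = "\<lambda>t. g j t * cnj (g j t)"] complex_norm_square mean_of_real[symmetric]
          flip: of_real_power)
  next
    case False
    then show ?thesis using that r mz
      by (simp add: avg2[where a = "g j" and b = "\<lambda>t. cnj (g k t)"] mean_cnj)
  qed
  have "complex_of_real (avg r n (\<lambda>T. (cmod (\<Sum>j\<in>{0..<n}. g j (T j)))^2))
      = avg r n (\<lambda>T. \<Sum>j\<in>{0..<n}. \<Sum>k\<in>{0..<n}. g j (T j) * cnj (g k (T k)))"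
  proof -
    have "complex_of_real ((cmod z)^2) = z * cnj z" for z
      by (rule complex_norm_square)
    then show ?thesis
      by (simp add: avg_of_real[symmetric] sum_product cnj_sum)
  qed
  also have "\<dots> = (\<Sum>j\<in>{0..<n}. \<Sum>k\<in>{0..<n}. avg r n (\<lambda>T. g j (T j) * cnj (g k (T k))))"
    by (simp add: avg_sum)
  also have "\<dots> = (\<Sum>j\<in>{0..<n}. \<Sum>k\<in>{0..<n}. (if k = j then complex_of_real (mean r (\<lambda>t. (cmod (g j t))^2)) else 0))"
    by (intro sum.cong refl) (simp add: tm)
  also have "\<dots> = complex_of_real (\<Sum>j\<in>{0..<n}. mean r (\<lambda>t. (cmod (g j t))^2))"
    by simp
  finally show ?thesis by (simp only: of_real_eq_iff)
qed

lemma expand4: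
  fixes a :: "nat \<Rightarrow> complex"
  shows "(\<Sum>j\<in>I. a j) * ((\<Sum>j\<in>I. a j) * (cnj (\<Sum>j\<in>I. a j) * cnj (\<Sum>j\<in>I. a j)))
    = (\<Sum>j\<in>I. \<Sum>k\<in>I. \<Sum>l\<in>I. \<Sum>m\<in>I. a j * (a k * (cnj (a l) * cnj (a m))))"
proof -
  have e1: "cnj (\<Sum>j\<in>I. a j) * cnj (\<Sum>j\<in>I. a j) = (\<Sum>l\<in>I. \<Sum>m\<in>I. cnj (a l) * cnj (a m))"
    by (simp only: cnj_sum sum_product)
  have e2: "(\<Sum>j\<in>I. a j) * (\<Sum>l\<in>I. \<Sum>m\<in>I. cnj (a l) * cnj (a m))
      = (\<Sum>k\<in>I. \<Sum>l\<in>I. \<Sum>m\<in>I. a k * (cnj (a l) * cnj (a m)))"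
    by (simp only: sum_product) (simp only: sum_distrib_left)
  have e3: "(\<Sum>j\<in>I. a j) * (\<Sum>k\<in>I. \<Sum>l\<in>I. \<Sum>m\<in>I. a k * (cnj (a l) * cnj (a m)))
      = (\<Sum>j\<in>I. \<Sum>k\<in>I. \<Sum>l\<in>I. \<Sum>m\<in>I. a j * (a k * (cnj (a l) * cnj (a m))))"
    by (simp only: sum_product) (simp only: sum_distrib_left)
  show ?thesis by (simp only: e1 e2 e3)
qed

lemma Q_bound:
  fixes g :: "nat \<Rightarrow> nat \<Rightarrow> complex"
  assumes r: "r > 0" and p: "p < n" and q: "q < n"
  shows "avg r n (\<lambda>T. (cmod (g p (T p)))^2 * (cmod (g q (T q)))^2)
     \<le> real r * mean r (\<lambda>t. (cmod (g p t))^2) * mean r (\<lambda>t. (cmod (g q t))^2)"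
proof -
  have vnn: "0 \<le> mean r (\<lambda>t. (cmod (g j t))^2)" for j
    unfolding mean_def by (auto intro!: sum_nonneg divide_nonneg_nonneg)
  show ?thesis
  proof (cases "p = q")
    case True
    have pt: "(cmod (g p t))^2 \<le> real r * mean r (\<lambda>t. (cmod (g p t))^2)" if "t < r" for t
    proof -
      have "real r * mean r (\<lambda>t. (cmod (g p t))^2) = (\<Sum>t\<in>{0..<r}. (cmod (g p t))^2)"
        using r unfolding mean_def by simp
      also have "(cmod (g p t))^2 \<le> \<dots>"
        using that by (intro member_le_sum) auto
      finally show ?thesis by simp
    qed
    have "avg r n (\<lambda>T. (cmod (g p (T p)))^2 * (cmod (g q (T q)))^2)
        = mean r (\<lambda>t. (cmod (g p t))^2 * (cmod (g p t))^2)"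
      using True r p avg1[of r p n "\<lambda>t. (cmod (g p t))^2 * (cmod (g p t))^2"] by simp
    also have "\<dots> \<le> mean r (\<lambda>t. (real r * mean r (\<lambda>t. (cmod (g p t))^2)) * (cmod (g p t))^2)"
      by (intro mean_mono mult_right_mono pt) auto
    also have "\<dots> = real r * mean r (\<lambda>t. (cmod (g p t))^2) * mean r (\<lambda>t. (cmod (g q t))^2)"
      using True by (simp add: mean_cmult)
    finally show ?thesis .
  next
    case False
    have "avg r n (\<lambda>T. (cmod (g p (T p)))^2 * (cmod (g q (T q)))^2)
        = mean r (\<lambda>t. (cmod (g p t))^2) * mean r (\<lambda>t. (cmod (g q t))^2)"
      using False r p q by (simp add: avg2[where a = "\<lambda>t. (cmod (g p t))^2" and b = "\<lambda>t. (cmod (g q t))^2"])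
    also have "\<dots> \<le> real r * (mean r (\<lambda>t. (cmod (g p t))^2) * mean r (\<lambda>t. (cmod (g q t))^2))"
    proof -
      have "0 \<le> mean r (\<lambda>t. (cmod (g p t))^2) * mean r (\<lambda>t. (cmod (g q t))^2)"
        using vnn[of p] vnn[of q] by simp
      note X = mult_right_mono[OF _ this, of 1 "real r"]
      show ?thesis using r X by simp
    qed
    finally show ?thesis by (simp add: mult_ac)
  qed
qed

definition Qf :: "nat \<Rightarrow> nat \<Rightarrow> (nat \<Rightarrow> nat \<Rightarrow> complex) \<Rightarrow> nat \<Rightarrow> nat \<Rightarrow> real" where
  "Qf r n g p q = avg r n (\<lambda>T. (cmod (g p (T p)))^2 * (cmod (g q (T q)))^2)"

lemma term_bound:
  fixes g :: "nat \<Rightarrow> nat \<Rightarrow> complex"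
  assumes r: "r > 0" and mz: "\<And>j. j < n \<Longrightarrow> mean r (g j) = 0"
    and jn: "j < n" and kn: "k < n" and ln: "l < n" and mn: "m < n"
  shows "cmod (avg r n (\<lambda>T. g j (T j) * (g k (T k) * (cnj (g l (T l)) * cnj (g m (T m))))))
    \<le> (if k = j then if m = l then Qf r n g j l else 0 else 0)
     + (if l = j then if m = k then Qf r n g j k else 0 else 0)
     + (if m = j then if l = k then Qf r n g j k else 0 else 0)"
    (is "cmod ?t \<le> ?B")
proof -
  have Qnn: "0 \<le> Qf r n g p q" for p q
    unfolding Qf_def by (intro avg_nonneg) auto
  have mzc: "mean r (\<lambda>t. cnj (g i t)) = 0" if "i < n" for i
    using mz[OF that] by (simp add: mean_cnj)
  have Bnn: "0 \<le> ?B" using Qnn by simp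
  show ?thesis
  proof (cases "(k = j \<and> m = l) \<or> (l = j \<and> m = k) \<or> (m = j \<and> l = k)")
    case False
    then consider "j \<noteq> k" "j \<noteq> l" "j \<noteq> m" | "k \<noteq> j" "k \<noteq> l" "k \<noteq> m"
      | "l \<noteq> j" "l \<noteq> k" "l \<noteq> m" | "m \<noteq> j" "m \<noteq> k" "m \<noteq> l"
      by blast
    then have "?t = 0"
    proof cases
      case 1
      then show ?thesis
        using avg4_zero[OF r jn kn ln mn 1 mz[OF jn], of "g k" "\<lambda>t. cnj (g l t)" "\<lambda>t. cnj (g m t)"]
        by (simp add: mult_ac)
    next
      case 2
      then show ?thesis
        using avg4_zero[OF r kn jn ln mn 2 mz[OF kn], of "g j" "\<lambda>t. cnj (g l t)" "\<lambda>t. cnj (g m t)"]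
        by (simp add: mult_ac)
    next
      case 3
      then show ?thesis
        using avg4_zero[OF r ln jn kn mn 3 mzc[OF ln], of "g j" "g k" "\<lambda>t. cnj (g m t)"]
        by (simp add: mult_ac)
    next
      case 4
      then show ?thesis
        using avg4_zero[OF r mn jn kn ln 4 mzc[OF mn], of "g j" "g k" "\<lambda>t. cnj (g l t)"]
        by (simp add: mult_ac)
    qed
    then show ?thesis using Bnn by simp
  next
    case True
    have "cmod ?t \<le> avg r n (\<lambda>T. cmod (g j (T j)) * (cmod (g k (T k)) * (cmod (g l (T l)) * cmod (g m (T m)))))"
      using norm_avg[of r n "\<lambda>T. g j (T j) * (g k (T k) * (cnj (g l (T l)) * cnj (g m (T m))))"]
      by (simp add: norm_mult)
    also have "\<dots> \<le> ?B"
      using True Qnn unfolding Qf_def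
      by (elim disjE conjE) (auto simp: power2_eq_square mult_ac)
    finally show ?thesis .
  qed
qed

lemma norm_sum4:
  fixes F :: "'i \<Rightarrow> 'i \<Rightarrow> 'i \<Rightarrow> 'i \<Rightarrow> 'a::real_normed_vector"
  shows "norm (\<Sum>j\<in>I. \<Sum>k\<in>I. \<Sum>l\<in>I. \<Sum>m\<in>I. F j k l m)
    \<le> (\<Sum>j\<in>I. \<Sum>k\<in>I. \<Sum>l\<in>I. \<Sum>m\<in>I. norm (F j k l m))"
  by (rule order_trans[OF norm_sum], rule sum_mono, rule order_trans[OF norm_sum], rule sum_mono,
      rule order_trans[OF norm_sum], rule sum_mono, rule norm_sum)

lemma moment4:
  fixes g :: "nat \<Rightarrow> nat \<Rightarrow> complex"
  assumes r: "r > 0" and mz: "\<And>j. j < n \<Longrightarrow> mean r (g j) = 0"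
  shows "avg r n (\<lambda>T. (cmod (\<Sum>j\<in>{0..<n}. g j (T j)))^4)
     \<le> 3 * real r * (\<Sum>j\<in>{0..<n}. mean r (\<lambda>t. (cmod (g j t))^2))^2"
proof -
  define H where "H T = (\<Sum>j\<in>{0..<n}. g j (T j))" for T :: "nat \<Rightarrow> nat"
  define v where "v j = mean r (\<lambda>t. (cmod (g j t))^2)" for j
  define t where "t j k l m = avg r n (\<lambda>T. g j (T j) * (g k (T k) * (cnj (g l (T l)) * cnj (g m (T m)))))"
    for j k l m
  have c4: "complex_of_real ((cmod z)^4) = z * (z * (cnj z * cnj z))" for z
  proof -
    have "complex_of_real ((cmod z)^4) = (complex_of_real ((cmod z)^2))^2" by simp
    also have "\<dots> = (z * cnj z)^2" by (simp only: complex_norm_square)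
    finally show ?thesis by (simp add: power2_eq_square mult_ac)
  qed
  have "complex_of_real (avg r n (\<lambda>T. (cmod (H T))^4))
      = avg r n (\<lambda>T. H T * (H T * (cnj (H T) * cnj (H T))))"
    by (simp only: avg_of_real[symmetric] c4)
  also have "\<dots> = (\<Sum>j\<in>{0..<n}. \<Sum>k\<in>{0..<n}. \<Sum>l\<in>{0..<n}. \<Sum>m\<in>{0..<n}. t j k l m)"
    unfolding H_def t_def by (simp only: expand4 avg_sum)
  finally have eq: "complex_of_real (avg r n (\<lambda>T. (cmod (H T))^4))
      = (\<Sum>j\<in>{0..<n}. \<Sum>k\<in>{0..<n}. \<Sum>l\<in>{0..<n}. \<Sum>m\<in>{0..<n}. t j k l m)" .
  have "avg r n (\<lambda>T. (cmod (H T))^4) = Re (complex_of_real (avg r n (\<lambda>T. (cmod (H T))^4)))"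
    by simp
  also have "\<dots> \<le> cmod (complex_of_real (avg r n (\<lambda>T. (cmod (H T))^4)))"
    by (rule complex_Re_le_cmod)
  also have "\<dots> \<le> (\<Sum>j\<in>{0..<n}. \<Sum>k\<in>{0..<n}. \<Sum>l\<in>{0..<n}. \<Sum>m\<in>{0..<n}. cmod (t j k l m))"
    unfolding eq by (rule norm_sum4)
  also have "\<dots> \<le> (\<Sum>j\<in>{0..<n}. \<Sum>k\<in>{0..<n}. \<Sum>l\<in>{0..<n}. \<Sum>m\<in>{0..<n}.
      (if k = j then if m = l then Qf r n g j l else 0 else 0)
     + (if l = j then if m = k then Qf r n g j k else 0 else 0)
     + (if m = j then if l = k then Qf r n g j k else 0 else 0))"
    unfolding t_def by (intro sum_mono term_bound[OF r mz]) auto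
  also have "\<dots> = 3 * (\<Sum>j\<in>{0..<n}. \<Sum>k\<in>{0..<n}. Qf r n g j k)"
    by (rule sum4_delta) simp
  also have "\<dots> \<le> 3 * (\<Sum>j\<in>{0..<n}. \<Sum>k\<in>{0..<n}. real r * v j * v k)"
    unfolding v_def Qf_def by (intro mult_left_mono sum_mono Q_bound[OF r]) auto
  also have "\<dots> = 3 * real r * (\<Sum>j\<in>{0..<n}. v j)^2"
    by (simp add: power2_eq_square sum_product sum_distrib_left mult_ac)
  finally show ?thesis unfolding H_def v_def .
qed


definition ee :: "nat \<Rightarrow> int \<Rightarrow> complex" where
  "ee r x = exp (2 * pi * \<i> * of_int x / of_nat r)"

lemma ee_add: "ee r (x + y) = ee r x * ee r y"
  unfolding ee_def by (simp add: exp_add[symmetric] distrib_left add_divide_distrib)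

lemma ee_zero: "ee r 0 = 1"
  unfolding ee_def by simp

lemma ee_cnj: "cnj (ee r x) = ee r (- x)"
  unfolding ee_def by (simp add: exp_cnj)

lemma ee_pow: "ee r (x * int s) = ee r x ^ s"
proof -
  have "ee r (x * int s) = exp (of_nat s * (2 * pi * \<i> * of_int x / of_nat r))"
    unfolding ee_def by (simp add: mult_ac)
  then show ?thesis unfolding ee_def by (simp only: exp_of_nat_mult)
qed

lemma ee_sum: "finite K \<Longrightarrow> ee r (\<Sum>k\<in>K. F k) = (\<Prod>k\<in>K. ee r (F k))"
  by (induction K rule: finite_induct) (simp_all add: ee_zero ee_add)

lemma ee_geo:
  assumes r: "r > 0" and nd: "\<not> int r dvd x"
  shows "(\<Sum>s\<in>{0..<r}. ee r (x * int s)) = 0"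
proof -
  define z where "z = ee r x"
  have z1: "z \<noteq> 1"
  proof
    assume "z = 1"
    then obtain m :: int where "2 * pi * of_int x / of_nat r = of_int (2 * m) * pi"
      unfolding z_def ee_def exp_eq_1 by auto
    then have "of_int x = of_int (m * int r) * (pi / pi :: real)"
      using r by (simp add: field_simps)
    then have "x = m * int r" using pi_gt_zero
      by (metis div_self less_irrefl mult.right_neutral of_int_eq_iff)
    then show False using nd by simp
  qed
  have zr: "z ^ r = 1"
  proof -
    have "z ^ r = ee r (x * int r)" unfolding z_def by (simp only: ee_pow)
    also have "\<dots> = exp (2 * pi * \<i> * of_int x)"
      unfolding ee_def using r by (simp add: mult_ac)
    also have "\<dots> = 1"
      unfolding exp_eq_1 by (auto intro!: exI[of _ x])
    finally show ?thesis .
  qed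
  have "(\<Sum>s\<in>{0..<r}. ee r (x * int s)) = (\<Sum>s<r. z ^ s)"
    unfolding z_def by (simp add: ee_pow atLeast0LessThan)
  also have "\<dots> = 0" using z1 zr by (simp add: geometric_sum)
  finally show ?thesis .
qed

lemma char_ee: "character r n S T = ee r (\<Sum>k\<in>{0..<n}. int (S k) * int (T k))"
  unfolding character_def ee_def by (simp add: atLeast0LessThan)

lemma cube_eq_iff:
  assumes "T \<in> cube r n" "T' \<in> cube r n"
  shows "T = T' \<longleftrightarrow> (\<forall>k\<in>{0..<n}. T k = T' k)"
  using assms unfolding cube_def by (auto simp: PiE_def intro: extensionalityI)

lemma cube_lt: "T \<in> cube r n \<Longrightarrow> k < n \<Longrightarrow> T k < r"
  unfolding cube_def by auto

lemma ee_geo_diff: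
  assumes r: "r > 0" and a: "a < r" and b: "b < r"
  shows "(\<Sum>s\<in>{0..<r}. ee r ((int a - int b) * int s)) = (if a = b then of_nat r else 0)"
proof (cases "a = b")
  case True
  then show ?thesis by (simp add: ee_zero)
next
  case False
  have "\<not> int r dvd (int a - int b)"
  proof
    assume "int r dvd (int a - int b)"
    then have "\<bar>int r\<bar> \<le> \<bar>int a - int b\<bar>"
      using False by (intro dvd_imp_le_int) auto
    then show False using a b by auto
  qed
  then show ?thesis using False ee_geo[OF r] by simp
qed

lemma kernel:
  assumes r: "r > 0" and T: "T \<in> cube r n" and T': "T' \<in> cube r n"
  shows "(\<Sum>S\<in>cube r n. character r n S T * cnj (character r n S T'))
     = (if T = T' then of_nat (r ^ n) else 0)"
proof -
  have pt: "character r n S T * cnj (character r n S T')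
      = (\<Prod>k\<in>{0..<n}. ee r ((int (T k) - int (T' k)) * int (S k)))" for S
  proof -
    have "character r n S T * cnj (character r n S T')
        = ee r ((\<Sum>k\<in>{0..<n}. int (S k) * int (T k)) + - (\<Sum>k\<in>{0..<n}. int (S k) * int (T' k)))"
      unfolding char_ee ee_add ee_cnj ..
    also have "(\<Sum>k\<in>{0..<n}. int (S k) * int (T k)) + - (\<Sum>k\<in>{0..<n}. int (S k) * int (T' k))
        = (\<Sum>k\<in>{0..<n}. (int (T k) - int (T' k)) * int (S k))"
      by (simp add: sum_subtractf[symmetric] algebra_simps)
    finally show ?thesis by (simp add: ee_sum)
  qed
  have "(\<Sum>S\<in>cube r n. character r n S T * cnj (character r n S T'))
      = (\<Sum>S\<in>cube r n. \<Prod>k\<in>{0..<n}. ee r ((int (T k) - int (T' k)) * int (S k)))"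
    by (simp add: pt)
  also have "\<dots> = (\<Prod>k\<in>{0..<n}. \<Sum>s\<in>{0..<r}. ee r ((int (T k) - int (T' k)) * int s))"
    unfolding cube_def by (rule prod_sum_PiE[symmetric]) auto
  also have "\<dots> = (\<Prod>k\<in>{0..<n}. if T k = T' k then of_nat r else 0)"
    using cube_lt[OF T] cube_lt[OF T'] by (intro prod.cong refl ee_geo_diff[OF r]) auto
  also have "\<dots> = (if T = T' then of_nat (r ^ n) else 0)"
  proof (cases "T = T'")
    case True
    then show ?thesis by simp
  next
    case False
    then obtain k where "k \<in> {0..<n}" "T k \<noteq> T' k" using False cube_eq_iff[OF T T'] by blast
    then show ?thesis using False by (intro trans[OF prod_zero]) auto
  qed
  finally show ?thesis .
qed

lemma inversion:
  assumes r: "r > 0" and T: "T \<in> cube r n"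
  shows "f T = (\<Sum>S\<in>cube r n. fourier_coeff r n f S * character r n S T)"
proof -
  define N where "N = real (card (cube r n))"
  have N: "N = real r ^ n" unfolding N_def card_cube by simp
  have "(\<Sum>S\<in>cube r n. fourier_coeff r n f S * character r n S T)
      = (\<Sum>S\<in>cube r n. \<Sum>T'\<in>cube r n. of_real (1 / N) * (f T' * (character r n S T * cnj (character r n S T'))))"
    unfolding fourier_coeff_def avg_def N_def scaleR_conv_of_real
    by (simp add: sum_distrib_left sum_distrib_right mult_ac)
  also have "\<dots> = (\<Sum>T'\<in>cube r n. of_real (1 / N) * (f T' * (\<Sum>S\<in>cube r n. character r n S T * cnj (character r n S T'))))"
    by (subst sum.swap) (simp add: sum_distrib_left)
  also have "\<dots> = (\<Sum>T'\<in>cube r n. if T' = T then of_real (1 / N) * (f T * of_nat (r ^ n)) else 0)"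
    using kernel[OF r T] by (intro sum.cong refl) auto
  also have "\<dots> = of_real (1 / N) * (f T * of_nat (r ^ n))"
    using T finite_cube by simp
  also have "\<dots> = f T" using r unfolding N by simp
  finally show ?thesis ..
qed

lemma weight0_char:
  assumes "weight n S = 0"
  shows "character r n S T = 1"
proof -
  have "{k\<in>{0..<n}. S k \<noteq> 0} = {}"
    using assms unfolding weight_def by simp
  then have "\<forall>k\<in>{0..<n}. S k = 0" by blast
  then have "(\<Sum>k\<in>{0..<n}. int (S k) * int (T k)) = 0" by simp
  then show ?thesis unfolding char_ee by (simp add: ee_zero)
qed

lemma decomp:
  assumes r: "r > 0" and T: "T \<in> cube r n"
  shows "f T = (\<Sum>S\<in>{S\<in>cube r n. weight n S = 0}. fourier_coeff r n f S)
     + level_eq r n 1 f T + level_gt r n 1 f T"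
proof -
  define X where "X S = fourier_coeff r n f S * character r n S T" for S
  have "(\<Sum>S\<in>cube r n. X S) = (\<Sum>S\<in>cube r n. (if weight n S = 0 then X S else 0)
      + (if weight n S = 1 then X S else 0) + (if weight n S > 1 then X S else 0))"
    by (intro sum.cong) auto
  also have "\<dots> = (\<Sum>S\<in>{S\<in>cube r n. weight n S = 0}. X S) + (\<Sum>S\<in>{S\<in>cube r n. weight n S = 1}. X S)
      + (\<Sum>S\<in>{S\<in>cube r n. weight n S > 1}. X S)"
    by (simp add: sum.distrib sum.inter_filter finite_cube)
  also have "(\<Sum>S\<in>{S\<in>cube r n. weight n S = 0}. X S) = (\<Sum>S\<in>{S\<in>cube r n. weight n S = 0}. fourier_coeff r n f S)"
    unfolding X_def by (intro sum.cong) (auto simp: weight0_char)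
  finally show ?thesis
    using inversion[OF r T, of f] unfolding X_def level_eq_def level_gt_def level_part_def by simp
qed

definition gg :: "nat \<Rightarrow> nat \<Rightarrow> ((nat \<Rightarrow> nat) \<Rightarrow> complex) \<Rightarrow> nat \<Rightarrow> nat \<Rightarrow> complex" where
  "gg r n f j t = (\<Sum>S\<in>{S\<in>cube r n. weight n S = 1}.
      if S j \<noteq> 0 then fourier_coeff r n f S * ee r (int (S j) * int t) else 0)"

lemma level1_decomp:
  shows "level_eq r n 1 f T = (\<Sum>j\<in>{0..<n}. gg r n f j (T j))"
proof -
  have inner: "(\<Sum>j\<in>{0..<n}. if S j \<noteq> 0 then fourier_coeff r n f S * ee r (int (S j) * int (T j)) else 0)
      = fourier_coeff r n f S * character r n S T"
    if S: "S \<in> {S\<in>cube r n. weight n S = 1}" for S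
  proof -
    from S have "card {k\<in>{0..<n}. S k \<noteq> 0} = 1" unfolding weight_def by simp
    then obtain j0 where j0: "{k\<in>{0..<n}. S k \<noteq> 0} = {j0}" by (rule card_1_singletonE)
    have "(\<Sum>k\<in>{0..<n}. int (S k) * int (T k)) = (\<Sum>k\<in>{k\<in>{0..<n}. S k \<noteq> 0}. int (S k) * int (T k))"
      by (rule sum.mono_neutral_right) auto
    then have "(\<Sum>k\<in>{0..<n}. int (S k) * int (T k)) = int (S j0) * int (T j0)"
      unfolding j0 by simp
    then have chr: "character r n S T = ee r (int (S j0) * int (T j0))"
      unfolding char_ee by simp
    have "(\<Sum>j\<in>{0..<n}. if S j \<noteq> 0 then fourier_coeff r n f S * ee r (int (S j) * int (T j)) else 0)
        = (\<Sum>j\<in>{k\<in>{0..<n}. S k \<noteq> 0}. fourier_coeff r n f S * ee r (int (S j) * int (T j)))"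
      by (rule sum.inter_filter[symmetric]) simp
    also have "\<dots> = fourier_coeff r n f S * ee r (int (S j0) * int (T j0))"
      unfolding j0 by simp
    finally show ?thesis using chr by simp
  qed
  have "(\<Sum>j\<in>{0..<n}. gg r n f j (T j))
      = (\<Sum>S\<in>{S\<in>cube r n. weight n S = 1}. \<Sum>j\<in>{0..<n}.
          if S j \<noteq> 0 then fourier_coeff r n f S * ee r (int (S j) * int (T j)) else 0)"
    unfolding gg_def by (rule sum.swap)
  also have "\<dots> = (\<Sum>S\<in>{S\<in>cube r n. weight n S = 1}. fourier_coeff r n f S * character r n S T)"
    by (intro sum.cong refl inner)
  finally show ?thesis unfolding level_eq_def level_part_def by simp
qed

lemma gg_mean:
  assumes r: "r > 0" and j: "j < n"
  shows "mean r (gg r n f j) = 0"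
proof -
  have "(\<Sum>t\<in>{0..<r}. gg r n f j t)
      = (\<Sum>S\<in>{S\<in>cube r n. weight n S = 1}. if S j \<noteq> 0 then
          fourier_coeff r n f S * (\<Sum>t\<in>{0..<r}. ee r (int (S j) * int t)) else 0)"
    unfolding gg_def by (subst sum.swap) (auto intro!: sum.cong simp: sum_distrib_left)
  also have "\<dots> = 0"
  proof (intro sum.neutral ballI)
    fix S assume S: "S \<in> {S\<in>cube r n. weight n S = 1}"
    show "(if S j \<noteq> 0 then fourier_coeff r n f S * (\<Sum>t\<in>{0..<r}. ee r (int (S j) * int t)) else 0) = 0"
    proof (cases "S j = 0")
      case False
      have "S j < r" using S j cube_lt by blast
      then have "\<not> int r dvd int (S j)" using False
        by (metis dvd_imp_le le_neq_implies_less not_less of_nat_dvd_iff zero_less_iff_neq_zero)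
      then show ?thesis using ee_geo[OF r] by simp
    qed simp
  qed
  finally show ?thesis unfolding mean_def by simp
qed


lemma dist01_le: "b = 0 \<or> b = 1 \<Longrightarrow> dist01 z \<le> cmod (z - b)"
  unfolding dist01_def by auto

lemma dist01_nonneg: "0 \<le> dist01 z"
  unfolding dist01_def by simp

lemma dist01_lip: "dist01 c \<le> dist01 (c + x) + cmod x"
proof -
  obtain b where b: "b = 0 \<or> b = (1::complex)" "dist01 (c + x) = cmod (c + x - b)"
    unfolding dist01_def by (metis diff_zero min_def)
  have "dist01 c \<le> cmod (c - b)" using b(1) by (rule dist01_le)
  also have "\<dots> = cmod ((c + x - b) - x)" by simp
  also have "\<dots> \<le> cmod (c + x - b) + cmod x" by (rule norm_triangle_ineq4)
  finally show ?thesis using b(2) by simp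
qed

lemma dist01_local:
  assumes a: "a = 0 \<or> a = (1::complex)" and w: "cmod w < 1/4"
  shows "(cmod (w + x))^2 - 64 * (cmod x)^4 \<le> (dist01 (a + w + x))^2"
proof (cases "cmod (w + x) \<le> 1/2")
  case True
  define b where "b = 1 - a"
  have ab: "cmod (a - b) = 1" using a unfolding b_def by auto
  have "1 \<le> cmod (a + w + x - b) + cmod (w + x)"
    using ab norm_triangle_ineq4[of "a + w + x - b" "w + x"] by simp
  then have le: "cmod (w + x) \<le> cmod (a + w + x - b)" using True by linarith
  from a have "dist01 (a + w + x) = cmod (w + x)"
  proof
    assume "a = 0"
    then show ?thesis using le unfolding dist01_def b_def by (simp add: min_def)
  next
    assume "a = 1"
    with le have h: "cmod (w + x) \<le> cmod (a + w + x - b)" "a = 1" by auto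
    have "a + w + x - 1 = w + x" using h(2) by simp
    moreover have "cmod (w + x) \<le> cmod (a + w + x)" using h unfolding b_def by simp
    ultimately show ?thesis unfolding dist01_def by (simp add: min_def)
  qed
  then show ?thesis by simp
next
  case False
  have "cmod (w + x) \<le> cmod w + cmod x" by (rule norm_triangle_ineq)
  then have x1: "cmod x > 1/4" and x2: "cmod (w + x) \<le> 2 * cmod x" using False w by linarith+
  have "(cmod (w + x))^2 \<le> (2 * cmod x)^2"
    using x2 by (intro power_mono) auto
  also have "\<dots> = 4 * (cmod x)^2" by (simp add: power2_eq_square)
  also have "\<dots> \<le> 64 * (cmod x)^4"
  proof -
    have "(1/4)^2 \<le> (cmod x)^2" by (rule power_mono) (use x1 in auto)
    then have "1/16 \<le> (cmod x)^2" by (simp add: power2_eq_square)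
    then have "(cmod x)^2 * (1/16) \<le> (cmod x)^2 * (cmod x)^2" by (intro mult_left_mono) auto
    then show ?thesis by (simp add: power4_eq_xxxx power2_eq_square)
  qed
  finally show ?thesis using dist01_nonneg[of "a + w + x"] by (smt (verit) zero_le_power2)
qed

lemma cmod_add_sq: "(cmod (w + x))^2 = (cmod w)^2 + (cmod x)^2 + 2 * Re (cnj w * x)"
  unfolding cmod_power2 by (simp add: power2_eq_square algebra_simps)

theorem lemma3p2:
  fixes r n :: nat and f :: "(nat \<Rightarrow> nat) \<Rightarrow> complex" and \<epsilon> :: real
  assumes "r \<ge> 3" and "n \<ge> 1"
    and "\<forall>T\<in>cube r n. level_gt r n 1 f T = 0"
    and "norm2_sq r n (\<lambda>T. complex_of_real (dist01 (f T))) \<le> \<epsilon>"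
    and "norm2_sq r n (level_eq r n 1 f) < 10^4 * \<epsilon>"
    and "\<epsilon> < 2 / (10^8 * real r)"
  shows "norm2_sq r n (level_eq r n 1 f) < 2 * \<epsilon>"
proof -
  have r: "r > 0" using assms(1) by simp
  define c where "c = (\<Sum>S\<in>{S\<in>cube r n. weight n S = 0}. fourier_coeff r n f S)"
  define h where "h = level_eq r n 1 f"
  define g where "g = gg r n f"
  have hg: "h = (\<lambda>T. \<Sum>j\<in>{0..<n}. g j (T j))"
    unfolding h_def g_def by (rule ext) (rule level1_decomp)
  have mz: "\<And>j. j < n \<Longrightarrow> mean r (g j) = 0" unfolding g_def by (rule gg_mean[OF r])
  have fch: "f T = c + h T" if "T \<in> cube r n" for T
    using decomp[OF r that, of f] assms(3) that unfolding c_def h_def by simp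
  define \<sigma> where "\<sigma> = norm2_sq r n h"
  have \<sigma>_def': "\<sigma> = avg r n (\<lambda>T. (cmod (h T))^2)" unfolding \<sigma>_def norm2_sq_def ..
  have \<sigma>nn: "0 \<le> \<sigma>" unfolding \<sigma>_def' by (intro avg_nonneg) auto
  have havg: "avg r n h = 0" unfolding hg by (rule moment1[OF r mz])
  have M4: "avg r n (\<lambda>T. (cmod (h T))^4) \<le> 3 * real r * \<sigma>^2"
    unfolding \<sigma>_def' hg using moment4[OF r mz] moment2[OF r mz] by simp
  define D where "D = avg r n (\<lambda>T. (dist01 (f T))^2)"
  have D: "D \<le> \<epsilon>" using assms(4) unfolding D_def norm2_sq_def by simp
  have \<sigma>e: "\<sigma> < 10^4 * \<epsilon>" using assms(5) unfolding \<sigma>_def h_def .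
  have epos: "\<epsilon> > 0" using \<sigma>e \<sigma>nn by simp
  have er: "\<epsilon> * real r < 2 / 10^8" using assms(6) r by (simp add: field_simps)
  have e3: "\<epsilon> < 2 / (3 * 10^8)"
  proof -
    have "2 / (10^8 * real r) \<le> 2 / (10^8 * 3)" using assms(1) by (intro divide_left_mono) auto
    then show ?thesis using assms(6) by simp
  qed
  have dc: "(dist01 c)^2 \<le> 2 * D + 2 * \<sigma>"
  proof -
    have "(dist01 c)^2 \<le> 2 * (dist01 (f T))^2 + 2 * (cmod (h T))^2" if "T \<in> cube r n" for T
    proof -
      have "dist01 c \<le> dist01 (f T) + cmod (h T)" using dist01_lip[of c "h T"] fch[OF that] by simp
      then have "(dist01 c)^2 \<le> (dist01 (f T) + cmod (h T))^2"
        using dist01_nonneg[of c] by (intro power_mono) auto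
      also have "\<dots> \<le> 2 * (dist01 (f T))^2 + 2 * (cmod (h T))^2"
      proof -
        have "0 \<le> (dist01 (f T) - cmod (h T))^2" by simp
        then show ?thesis unfolding power2_diff power2_sum by linarith
      qed
      finally show ?thesis .
    qed
    then have "avg r n (\<lambda>T. (dist01 c)^2) \<le> avg r n (\<lambda>T. 2 * (dist01 (f T))^2 + 2 * (cmod (h T))^2)"
      by (rule avg_mono)
    then show ?thesis unfolding D_def \<sigma>_def' by (simp add: avg_const[OF r] avg_add avg_cmult)
  qed
  obtain a :: complex where a: "a = 0 \<or> a = 1" and ca: "dist01 c = cmod (c - a)"
    unfolding dist01_def by (metis diff_zero min_def)
  define w where "w = c - a"
  have w: "cmod w < 1/4"
  proof -
    have s1: "\<sigma> < 10000 * \<epsilon>" using \<sigma>e by simp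
    have s2: "\<epsilon> < 2 / 300000000" using e3 by simp
    have "(dist01 c)^2 < 1/16" using dc D s1 s2 epos by linarith
    then have "(cmod w)^2 < (1/4)^2" unfolding w_def ca[symmetric] by (simp add: power2_eq_square)
    then show ?thesis by (rule power2_less_imp_less) simp
  qed
  have pt: "(cmod (w + h T))^2 - 64 * (cmod (h T))^4 \<le> (dist01 (f T))^2" if "T \<in> cube r n" for T
    using dist01_local[OF a w, of "h T"] fch[OF that] unfolding w_def by (simp add: add.assoc)
  have "avg r n (\<lambda>T. (cmod (w + h T))^2 - 64 * (cmod (h T))^4) \<le> D"
    unfolding D_def by (rule avg_mono) (rule pt)
  moreover have "avg r n (\<lambda>T. (cmod (w + h T))^2) = (cmod w)^2 + \<sigma>"
  proof -
    have "avg r n (\<lambda>T. (cmod (w + h T))^2)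
        = avg r n (\<lambda>T. (cmod w)^2 + (cmod (h T))^2 + 2 * Re (cnj w * h T))"
      by (simp add: cmod_add_sq)
    also have "\<dots> = (cmod w)^2 + \<sigma> + 2 * Re (cnj w * avg r n h)"
    proof -
      have e: "avg r n (\<lambda>T. Re (cnj w * h T)) = Re (cnj w * avg r n h)"
        by (simp only: avg_Re avg_cmult)
      show ?thesis unfolding \<sigma>_def'
        by (simp only: avg_add avg_const[OF r] avg_cmult e)
    qed
    finally show ?thesis using havg by simp
  qed
  ultimately have "(cmod w)^2 + \<sigma> - 64 * avg r n (\<lambda>T. (cmod (h T))^4) \<le> D"
    by (simp add: avg_diff avg_cmult)
  moreover have "64 * avg r n (\<lambda>T. (cmod (h T))^4) \<le> 192 * real r * \<sigma>^2"
    using M4 by simp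
  ultimately have main: "\<sigma> - 192 * real r * \<sigma>^2 \<le> \<epsilon>"
    using D zero_le_power2[of "cmod w"] by linarith
  have rs: "real r * \<sigma> \<le> 2 / 10^4"
  proof -
    have "real r * \<sigma> \<le> real r * (10^4 * \<epsilon>)" using \<sigma>e r by (intro mult_left_mono) auto
    then show ?thesis using er by (simp add: mult_ac)
  qed
  have "\<sigma> * (real r * \<sigma>) \<le> \<sigma> * (2 / 10^4)" using rs \<sigma>nn by (intro mult_left_mono) auto
  then have "192 * real r * \<sigma>^2 \<le> \<sigma> * (384 / 10^4)" by (simp add: power2_eq_square mult_ac)
  then have "\<sigma> * (1 - 384 / 10^4) \<le> \<epsilon>" using main by (simp add: algebra_simps)
  then have "\<sigma> < 2 * \<epsilon>" using epos \<sigma>nn by simp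
  then show ?thesis unfolding \<sigma>_def h_def .
qed

end
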